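(* Let $p(z)=a_0z^n+a_1z^{n-1}+\dots+a_n$ with $a_0\in\mathbb{R}$, $a_0>0$, $a_1,\dots,a_n\in\mathbb{C}$, and suppose $p$ has no roots on the imaginary axis. Let $\varphi_p:\mathbb{R}\to\mathbb{R}$ be a continuous branch of $\omega\mapsto\operatorname{Arg}\big(i^{-n}p(i\omega)\big)$ and $\Delta_p=\lim_{\omega\to+\infty}\varphi_p(\omega)-\lim_{\omega\to-\infty}\varphi_p(\omega)$. Let $f_0(\omega)=\operatorname{Re}\big[i^{-n}p(i\omega)\big]$ ($\omega\in\mathbb{R}$), let $\omega_0<\omega_1<\dots<\omega_m$ be the real roots of $f_0$ of odd multiplicity (i.e. the parameter values at which the curve $\omega\mapsto i^{-n}p(i\omega)$ crosses the imaginary axis), and for $k=0,\dots,m$ put $i_k=\lim_{\omega\to\omega_k}\operatorname{sign}\frac{d}{d\omega}\varphi_p(\omega)$. Then $$\Delta_p=\pi\,(i_0+i_1+\dots+i_m),$$ where for $m=-1$ (no such roots) the right-hand side is $0$.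
   Context: $\Delta_p$ does not depend on the choice of continuous branch. *)

theory Defs
  imports "HOL-Analysis.Analysis" "HOL-Computational_Algebra.Polynomial"
begin

definition imag_axis_curve :: "complex poly \<Rightarrow> real \<Rightarrow> complex" where
  "imag_axis_curve p w = inverse (\<i> ^ degree p) * poly p (\<i> * complex_of_real w)"

text \<open>f0 as a real polynomial in w: the real part of the (complex) polynomial
  i^(-n) p(i w); evaluating it at real w gives Re (imag_axis_curve p w).\<close>
definition f0_poly :: "complex poly \<Rightarrow> real poly" where
  "f0_poly p = map_poly Re (smult (inverse (\<i> ^ degree p)) (p \<circ>\<^sub>p [:0, \<i>:]))"

definition odd_crossings :: "complex poly \<Rightarrow> real set" where
  "odd_crossings p = {w. odd (order w (f0_poly p))}"

definition Delta :: "(real \<Rightarrow> real) \<Rightarrow> real" where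
  "Delta \<phi> = Lim at_top \<phi> - Lim at_bot \<phi>"

end

theory Submission
  imports Defs
begin


lemma poly_map_Re: "poly (map_poly Re q) x = Re (poly q (complex_of_real x))"
  by (induction q) (auto simp: map_poly_pCons)

lemma poly_map_Im: "poly (map_poly Im q) x = Im (poly q (complex_of_real x))"
  by (induction q) (auto simp: map_poly_pCons)

lemma poly_map_cnj: "poly (map_poly cnj q) (complex_of_real x) = cnj (poly q (complex_of_real x))"
  by (induction q) (auto simp: map_poly_pCons)

locale L17 =
  fixes p :: "complex poly" and \<phi> :: "real \<Rightarrow> real"
  assumes lc_real: "lead_coeff p \<in> \<real>" and lc_pos: "Re (lead_coeff p) > 0"
    and nz: "\<forall>w::real. poly p (\<i> * complex_of_real w) \<noteq> 0"
    and cont: "continuous_on UNIV \<phi>"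
    and cisphi: "\<forall>w. cis (\<phi> w) = imag_axis_curve p w / complex_of_real (cmod (imag_axis_curve p w))"
begin

definition "q = smult (inverse (\<i> ^ degree p)) (p \<circ>\<^sub>p [:0, \<i>:])"
definition "gam x = imag_axis_curve p x"
definition "F = f0_poly p"
definition "X = odd_crossings p"

lemma gam_q: "gam x = poly q (complex_of_real x)"
  by (simp add: gam_def q_def imag_axis_curve_def poly_pcompose mult.commute)

lemma F_q: "F = map_poly Re q"
  by (simp add: F_def f0_poly_def q_def)

lemma polyF: "poly F x = Re (gam x)"
  by (simp add: F_q poly_map_Re gam_q)

lemma gam_nz: "gam x \<noteq> 0"
  using nz by (simp add: gam_def imag_axis_curve_def)

lemma cos_phi: "cos (\<phi> x) = Re (gam x) / cmod (gam x)"
  using arg_cong[OF spec[OF cisphi, of x], of Re] by (simp add: gam_def)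

lemma sin_phi: "sin (\<phi> x) = Im (gam x) / cmod (gam x)"
  using arg_cong[OF spec[OF cisphi, of x], of Im] by (simp add: gam_def)

lemma cos_phi_F: "cos (\<phi> x) = poly F x / cmod (gam x)"
  by (simp add: cos_phi polyF)

lemma deg_q: "degree q = degree p" and lc_q: "lead_coeff q = lead_coeff p"
proof -
  have d: "degree (p \<circ>\<^sub>p [:0, \<i>:]) = degree p" by (simp add: degree_pcompose)
  have "lead_coeff (p \<circ>\<^sub>p [:0, \<i>:]) = lead_coeff p * \<i> ^ degree p"
    by (subst lead_coeff_comp) auto
  then show "degree q = degree p" "lead_coeff q = lead_coeff p"
    using d by (auto simp: q_def)
qed

lemma F_nz: "F \<noteq> 0"
proof -
  have "coeff F (degree p) = Re (lead_coeff p)"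
    using deg_q lc_q by (simp add: F_q coeff_map_poly)
  then show ?thesis using lc_pos by auto
qed

lemma X_roots: "X \<subseteq> {x. poly F x = 0}"
proof
  fix x assume "x \<in> X"
  then have "odd (order x F)" by (simp add: X_def odd_crossings_def F_def)
  then show "x \<in> {x. poly F x = 0}" using order_root[of F x] by auto
qed

lemma X_finite: "finite X"
  using X_roots poly_roots_finite[OF F_nz] finite_subset by blast

end


lemma const_sign_connected:
  fixes f :: "real \<Rightarrow> real"
  assumes "connected S" "continuous_on S f" "\<forall>x\<in>S. f x \<noteq> 0"
  shows "\<exists>\<sigma>\<in>{-1,1}. \<forall>x\<in>S. \<sigma> * f x > 0"
proof (cases "S = {}")
  case True then show ?thesis by auto
next
  case False
  then obtain x0 where x0: "x0 \<in> S" by auto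
  define \<sigma> where "\<sigma> = sgn (f x0)"
  have s: "\<sigma> \<in> {-1,1}" using assms(3) x0 by (auto simp: \<sigma>_def sgn_if)
  have "\<forall>x\<in>S. \<sigma> * f x > 0"
  proof (rule ccontr)
    assume "\<not> ?thesis"
    then obtain x where x: "x \<in> S" "\<sigma> * f x \<le> 0" by auto
    have con: "connected (f ` S)" using assms connected_continuous_image by blast
    have "0 \<in> f ` S"
    proof (cases "f x \<le> f x0")
      case True
      then have "{f x..f x0} \<subseteq> f ` S" using connected_contains_Icc[OF con] x x0 by auto
      moreover have "f x \<le> 0 \<and> 0 \<le> f x0" using x assms(3) x0 True
        by (auto simp: \<sigma>_def sgn_if split: if_splits)
      ultimately show ?thesis by auto
    next
      case False
      then have "{f x0..f x} \<subseteq> f ` S" using connected_contains_Icc[OF con] x x0 by auto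
      moreover have "f x0 \<le> 0 \<and> 0 \<le> f x" using x assms(3) x0 False
        by (auto simp: \<sigma>_def sgn_if split: if_splits)
      ultimately show ?thesis by auto
    qed
    then show False using assms(3) by auto
  qed
  then show ?thesis using s by blast
qed

lemma even_order_sign:
  fixes P :: "real poly"
  assumes "connected S" "\<forall>r\<in>S. even (order r P)"
  shows "\<exists>\<sigma>\<in>{-1,1}. \<forall>x\<in>S. \<sigma> * poly P x \<ge> 0"
  using assms(2)
proof (induction "degree P" arbitrary: P rule: less_induct)
  case less
  show ?case
  proof (cases "P = 0")
    case True then show ?thesis by auto
  next
    case Pnz: False
    show ?thesis
    proof (cases "\<exists>r\<in>S. poly P r = 0")
      case False
      have "continuous_on S (poly P)" by (auto intro: continuous_intros)
      from const_sign_connected[OF assms(1) this] False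
      show ?thesis by (meson less_imp_le)
    next
      case True
      then obtain r where r: "r \<in> S" "poly P r = 0" by auto
      have "order r P \<noteq> 0" using r Pnz order_root by auto
      with less.prems r have "2 \<le> order r P" by (auto elim!: evenE)
      then have "[:-r,1:]^2 dvd P" using order_divides by blast
      then obtain P' where P': "P = [:-r,1:]^2 * P'" by (auto elim: dvdE)
      have P'nz: "P' \<noteq> 0" using Pnz P' by auto
      have deg: "degree P = 2 + degree P'" using P' P'nz by (simp add: degree_mult_eq degree_power_eq)
      have "\<forall>x\<in>S. even (order x P')"
      proof
        fix x assume x: "x \<in> S"
        have o: "order x P = order x ([:-r,1:]^2) + order x P'"
          using P' Pnz order_mult by metis
        have "even (order x ([:-r,1:]^2))"
        proof (cases "x = r")
          case True then show ?thesis using order_power_n_n[of r 2] by simp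
        next
          case False then have "poly ([:-r,1:]^2) x \<noteq> 0" by simp
          then show ?thesis using order_0I by (metis even_zero)
        qed
        then show "even (order x P')" using o less.prems x by auto
      qed
      have "\<exists>\<sigma>\<in>{-1,1}. \<forall>x\<in>S. \<sigma> * poly P' x \<ge> 0" using less.hyps[of P'] deg \<open>\<forall>x\<in>S. even (order x P')\<close> by simp
      then obtain \<sigma> where s: "\<sigma>\<in>{-1,1}" "\<forall>x\<in>S. \<sigma> * poly P' x \<ge> 0" by blast
      have "\<forall>x\<in>S. \<sigma> * poly P x \<ge> 0"
      proof
        fix x assume "x \<in> S"
        then have "\<sigma> * poly P' x \<ge> 0" using s by auto
        moreover have "\<sigma> * poly P x = (x - r)^2 * (\<sigma> * poly P' x)" using P' by (simp add: algebra_simps)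
        ultimately show "\<sigma> * poly P x \<ge> 0" by (metis zero_le_mult_iff zero_le_power2)
      qed
      then show ?thesis using s by auto
    qed
  qed
qed



lemma cos_pik: "cos (pi * of_int k) \<in> {-1, 1}"
  by simp

lemma cos_shift: "cos t = cos (pi * of_int k) * cos (t - pi * of_int k)"
proof -
  have "cos (t - pi * of_int k) = cos t * cos (pi * of_int k)"
    by (simp add: cos_diff)
  moreover have "cos (pi * of_int k) * cos (pi * of_int k) = 1" by simp
  ultimately show ?thesis by (metis mult.assoc mult.commute mult.left_neutral)
qed

lemma sin_shift: "sin (t - pi * of_int k) = cos (pi * of_int k) * sin t"
  by (simp add: sin_diff)

lemma cos_pos_band: "\<bar>s\<bar> < pi/2 \<Longrightarrow> cos s > 0"
  by (rule cos_gt_zero_pi) auto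

lemma cos_nonneg_band: "\<bar>s\<bar> \<le> pi/2 \<Longrightarrow> cos s \<ge> 0"
  by (rule cos_ge_zero) auto

lemma cos_neg_band: "pi/2 < s \<Longrightarrow> s \<le> pi \<Longrightarrow> cos s < 0"
proof -
  assume a: "pi/2 < s" "s \<le> pi"
  have "cos (pi - s) > 0" using a by (intro cos_gt_zero_pi) auto
  then show ?thesis by simp
qed

lemma band_choose:
  assumes s: "\<sigma> \<in> {-1,1::real}" and c: "\<sigma> * cos t \<ge> 0"
  shows "\<exists>k::int. \<sigma> * cos (pi * of_int k) > 0 \<and> \<bar>t - pi * of_int k\<bar> \<le> pi/2"
proof -
  define k0 where "k0 = round (t / pi)"
  have "\<bar>of_int k0 - t/pi\<bar> \<le> 1/2" unfolding k0_def by (rule of_int_round_abs_le)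
  then have "\<bar>pi * of_int k0 - t\<bar> \<le> pi/2"
  proof -
    have "pi * of_int k0 - t = pi * (of_int k0 - t/pi)" by (simp add: right_diff_distrib)
    then have "\<bar>pi * of_int k0 - t\<bar> = pi * \<bar>of_int k0 - t/pi\<bar>"
      by (simp add: abs_mult)
    then show ?thesis using \<open>\<bar>of_int k0 - t/pi\<bar> \<le> 1/2\<close> by (simp add: mult_left_mono[of _ _ pi, simplified])
  qed
  then have b: "\<bar>t - pi * of_int k0\<bar> \<le> pi/2" by (simp add: abs_minus_commute)
  show ?thesis
  proof (cases "\<sigma> * cos (pi * of_int k0) > 0")
    case True then show ?thesis using b by blast
  next
    case False
    then have sc: "\<sigma> * cos (pi * of_int k0) = -1" using s cos_pik[of k0] by auto
    have "\<sigma> * cos t = (\<sigma> * cos (pi * of_int k0)) * cos (t - pi * of_int k0)"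
      by (metis cos_shift mult.assoc)
    then have "\<sigma> * cos t = - cos (t - pi * of_int k0)" by (simp only: sc)
    then have "cos (t - pi * of_int k0) \<le> 0" using c by simp
    then have "\<not> \<bar>t - pi * of_int k0\<bar> < pi/2" using cos_pos_band by force
    then have eq: "t - pi * of_int k0 = pi/2 \<or> t - pi * of_int k0 = - (pi/2)" using b by linarith
    show ?thesis
    proof (cases "t - pi * of_int k0 = pi/2")
      case True
      have "cos (pi * of_int (k0+1)) = - cos (pi * of_int k0)"
        by (simp add: distrib_left cos_add)
      moreover have "t - pi * of_int (k0 + 1) = - (pi/2)" using True by (simp add: distrib_left)
      ultimately show ?thesis using sc by (intro exI[of _ "k0+1"]) auto
    next
      case False
      then have F: "t - pi * of_int k0 = - (pi/2)" using eq by auto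
      have "cos (pi * of_int (k0-1)) = - cos (pi * of_int k0)"
        by (simp add: right_diff_distrib cos_diff)
      then have "\<sigma> * cos (pi * of_int (k0-1)) > 0" using sc by (simp only: mult_minus_right)
      moreover have e: "t - pi * of_int (k0 - 1) = pi/2" using F by (simp add: right_diff_distrib)
      have "\<bar>t - pi * of_int (k0 - 1)\<bar> \<le> pi/2" unfolding e using pi_gt_zero by simp
      ultimately show ?thesis by blast
    qed
  qed
qed

lemma band_connected:
  fixes f :: "real \<Rightarrow> real"
  assumes S: "connected S" "S \<noteq> {}" and cf: "continuous_on S f" and s: "\<sigma> \<in> {-1,1::real}"
    and c: "\<forall>x\<in>S. \<sigma> * cos (f x) \<ge> 0"
  shows "\<exists>k::int. \<sigma> * cos (pi * of_int k) > 0 \<and> (\<forall>x\<in>S. \<bar>f x - pi * of_int k\<bar> \<le> pi/2)"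
proof -
  obtain x0 where x0: "x0 \<in> S" using S by auto
  obtain k where k: "\<sigma> * cos (pi * of_int k) > 0" "\<bar>f x0 - pi * of_int k\<bar> \<le> pi/2"
    using band_choose[OF s] c x0 by blast
  have sk: "\<sigma> * cos (pi * of_int k) = 1" using k s cos_pik[of k] by auto
  have con: "connected (f ` S)" using S cf connected_continuous_image by blast
  have neg: "\<sigma> * cos t < 0" if "pi/2 < \<bar>t - pi * of_int k\<bar>" "\<bar>t - pi * of_int k\<bar> \<le> pi" for t
  proof -
    have "\<sigma> * cos t = (\<sigma> * cos (pi * of_int k)) * cos (t - pi * of_int k)"
      using cos_shift[of t k] by simp
    also have "\<dots> = cos \<bar>t - pi * of_int k\<bar>" using sk by simp
    also have "\<dots> < 0" using that by (intro cos_neg_band) auto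
    finally show ?thesis .
  qed
  have "\<forall>x\<in>S. \<bar>f x - pi * of_int k\<bar> \<le> pi/2"
  proof (rule ccontr)
    assume "\<not> ?thesis"
    then obtain x1 where x1: "x1 \<in> S" "\<bar>f x1 - pi * of_int k\<bar> > pi/2" by force
    show False
    proof (cases "f x1 > pi * of_int k")
      case True
      define t where "t = min (f x1) (pi * of_int k + pi)"
      have "{f x0..f x1} \<subseteq> f ` S" using connected_contains_Icc[OF con] x0 x1 by auto
      moreover have "t \<in> {f x0..f x1}" using k(2) x1(2) True pi_gt_zero unfolding t_def atLeastAtMost_iff abs_le_iff abs_less_iff min_def max_def by auto
      ultimately obtain x where "x \<in> S" "f x = t" by auto
      moreover have "\<sigma> * cos t < 0"
      proof (rule neg)
        have "t - pi * of_int k > pi/2" "t - pi * of_int k \<le> pi"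
          using True x1(2) pi_gt_zero by (auto simp: t_def min_def)
        then show "pi/2 < \<bar>t - pi * of_int k\<bar>" "\<bar>t - pi * of_int k\<bar> \<le> pi" by auto
      qed
      ultimately show False using c by fastforce
    next
      case False
      define t where "t = max (f x1) (pi * of_int k - pi)"
      have "{f x1..f x0} \<subseteq> f ` S" using connected_contains_Icc[OF con] x0 x1 by auto
      moreover have "t \<in> {f x1..f x0}" using k(2) x1(2) False pi_gt_zero unfolding t_def atLeastAtMost_iff abs_le_iff abs_less_iff min_def max_def by auto
      ultimately obtain x where "x \<in> S" "f x = t" by auto
      moreover have "\<sigma> * cos t < 0"
      proof (rule neg)
        have "t - pi * of_int k < - (pi/2)" "t - pi * of_int k \<ge> - pi"
          using False x1(2) pi_gt_zero by (auto simp: t_def max_def)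
        then show "pi/2 < \<bar>t - pi * of_int k\<bar>" "\<bar>t - pi * of_int k\<bar> \<le> pi" by auto
      qed
      ultimately show False using c by fastforce
    qed
  qed
  then show ?thesis using k by blast
qed



context L17 begin

definition "dq x = poly (pderiv q) (complex_of_real x)"

lemma gam_has_deriv: "((\<lambda>u. poly q u) has_field_derivative poly (pderiv q) u) (at u)"
  by (rule poly_DERIV)

lemma phi_deriv: "(\<phi> has_real_derivative Im (dq x0 / gam x0)) (at x0)"
proof -
  define g0 where "g0 = gam x0"
  have g0nz: "g0 \<noteq> 0" using gam_nz by (simp add: g0_def)
  define u0 where "u0 = complex_of_real x0"
  have q0: "poly q u0 / g0 = 1" using g0nz by (simp add: g0_def u0_def gam_q)
  define h where "h u = Ln (poly q u / g0)" for u
  have dh: "(h has_field_derivative (inverse 1 * (poly (pderiv q) u0 / g0))) (at u0)"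
    unfolding h_def
    apply (rule DERIV_chain2[where f = Ln])
     apply (subst q0)
     apply (rule has_field_derivative_Ln) apply simp
    apply (rule DERIV_cdivide)
    apply (rule poly_DERIV)
    done
  define \<psi> where "\<psi> x = \<phi> x0 + Im (h (complex_of_real x))" for x
  have "((\<lambda>x. h (complex_of_real x)) has_vector_derivative (poly (pderiv q) u0 / g0)) (at x0)"
    using has_vector_derivative_real_field[OF dh[unfolded u0_def]] by (simp add: u0_def)
  from bounded_linear.has_vector_derivative[OF bounded_linear_Im this]
  have "((\<lambda>x. Im (h (complex_of_real x))) has_vector_derivative Im (poly (pderiv q) u0 / g0)) (at x0)" .
  then have "((\<lambda>x. \<phi> x0 + Im (h (complex_of_real x))) has_vector_derivative Im (poly (pderiv q) u0 / g0)) (at x0)"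
    using has_vector_derivative_add[OF has_vector_derivative_const] by fastforce
  then have dpsi: "(\<psi> has_real_derivative Im (dq x0 / gam x0)) (at x0)"
    by (simp add: has_real_derivative_iff_has_vector_derivative \<psi>_def[abs_def] dq_def u0_def g0_def)
  have psi0: "\<psi> x0 = \<phi> x0" using q0 by (simp add: \<psi>_def h_def u0_def)
  have cisdiff: "cis (\<phi> x - \<psi> x) = 1" for x
  proof -
    have gx: "gam x \<noteq> 0" by (rule gam_nz)
    have z: "gam x / g0 \<noteq> 0" using gx g0nz by simp
    have "cis (\<phi> x) = sgn (gam x)" using cisphi by (simp add: gam_def sgn_div_norm divide_inverse scaleR_conv_of_real mult.commute)
    moreover have "cis (\<phi> x0) = sgn g0" using cisphi by (simp add: g0_def gam_def sgn_div_norm divide_inverse scaleR_conv_of_real mult.commute)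
    moreover have "Im (h (complex_of_real x)) = Arg (gam x / g0)"
      using Arg_eq_Im_Ln[OF z] by (simp add: h_def gam_q)
    ultimately have "cis (\<psi> x) = sgn g0 * sgn (gam x / g0)"
      using cis_Arg[OF z] by (simp add: \<psi>_def cis_mult[symmetric])
    also have "\<dots> = sgn (g0 * (gam x / g0))" by (simp only: sgn_mult)
    also have "\<dots> = sgn (gam x)" using g0nz by simp
    finally have "cis (\<psi> x) = cis (\<phi> x)" using \<open>cis (\<phi> x) = sgn (gam x)\<close> by simp
    then show ?thesis by (simp add: cis_divide[symmetric])
  qed
  have int: "\<exists>n::int. \<phi> x - \<psi> x = of_int n * (2 * pi)" for x
  proof -
    have "cos (\<phi> x - \<psi> x) = 1" using arg_cong[OF cisdiff[of x], of Re] by simp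
    then show ?thesis using cos_one_2pi_int by (metis mult.assoc)
  qed
  have cphi: "isCont \<phi> x0" using cont by (simp add: continuous_on_eq_continuous_at)
  have cpsi: "isCont \<psi> x0" using dpsi by (rule DERIV_isCont)
  have "((\<lambda>x. \<phi> x - \<psi> x) \<longlongrightarrow> 0) (at x0)"
    using isCont_diff[OF cphi cpsi] psi0 by (simp add: isCont_def)
  then have "eventually (\<lambda>x. dist (\<phi> x - \<psi> x) 0 < 2 * pi) (at x0)"
    using tendstoD pi_gt_zero by force
  then obtain d where d: "d > 0" "\<forall>x. x \<noteq> x0 \<and> dist x x0 < d \<longrightarrow> \<bar>\<phi> x - \<psi> x\<bar> < 2 * pi"
    by (auto simp: eventually_at dist_real_def)
  have eq: "\<psi> x = \<phi> x" if "dist x x0 < d" for x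
  proof (cases "x = x0")
    case True then show ?thesis using psi0 by simp
  next
    case False
    obtain n :: int where n: "\<phi> x - \<psi> x = of_int n * (2 * pi)" using int by blast
    have "\<bar>of_int n * (2 * pi)\<bar> < 2 * pi" using d False that n by metis
    then have "\<bar>of_int n\<bar> < (1::real)" by (simp add: abs_mult)
    then have "n = 0" by linarith
    then show ?thesis using n by simp
  qed
  show ?thesis
    by (rule has_field_derivative_transform_within[OF dpsi d(1)]) (auto simp: eq)
qed

lemma deriv_phi: "deriv \<phi> x = Im (dq x / gam x)"
  using phi_deriv DERIV_imp_deriv by blast

end


lemma deriv_sign_lemma:
  fixes f d :: "real \<Rightarrow> real"
  assumes ab: "a < b" and cf: "continuous_on {a..b} f"
    and df: "\<And>z. z \<in> {a<..<b} \<Longrightarrow> (f has_real_derivative d z) (at z)"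
    and cd: "continuous_on {a<..<b} d" and dnz: "\<forall>z\<in>{a<..<b}. d z \<noteq> 0"
    and xy: "x \<in> {a..b}" "y \<in> {a..b}" "x < y" "f x < f y"
  shows "\<forall>z\<in>{a<..<b}. d z > 0"
proof -
  have "continuous_on {x..y} f" using cf by (rule continuous_on_subset) (use xy in auto)
  moreover have "f differentiable (at z)" if "x < z" "z < y" for z
    using df[of z] that xy by (auto simp: real_differentiable_def)
  ultimately obtain l z where z: "x < z" "z < y" "DERIV f z :> l" "f y - f x = (y - x) * l"
    using MVT[OF xy(3)] by blast
  have "l > 0" using z(4) xy by (metis diff_gt_0_iff_gt zero_less_mult_pos)
  have zab: "z \<in> {a<..<b}" using z xy by auto
  have "d z = l" using DERIV_unique[OF df[OF zab] z(3)] .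
  obtain \<sigma> where s: "\<sigma> \<in> {-1,1}" "\<forall>x\<in>{a<..<b}. \<sigma> * d x > 0"
    using const_sign_connected[OF connected_Ioo cd dnz] by blast
  have "\<sigma> = 1" using s zab \<open>d z = l\<close> \<open>l > 0\<close> by (auto simp: mult_less_0_iff) (use zab in force)
  then show ?thesis using s by auto
qed

context L17 begin

definition "Np = map_poly Im (pderiv q * map_poly cnj q)"

lemma poly_Np: "poly Np x = Im (dq x * cnj (gam x))"
  by (simp add: Np_def poly_map_Im poly_map_cnj dq_def gam_q)

lemma deriv_phi_N: "deriv \<phi> x = poly Np x / (cmod (gam x))^2"
proof -
  have "dq x / gam x = dq x * cnj (gam x) / complex_of_real ((cmod (gam x))^2)"
  proof -
    have "complex_of_real ((cmod (gam x))^2) = gam x * cnj (gam x)" by (rule complex_norm_square)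
    then show ?thesis using gam_nz[of x] by (simp add: field_simps)
  qed
  then show ?thesis by (simp add: deriv_phi poly_Np)
qed

lemma deriv_cont: "continuous_on S (deriv \<phi>)"
proof -
  have "continuous_on S (\<lambda>x. poly Np x / (cmod (gam x))^2)"
    using gam_nz unfolding gam_q by (intro continuous_intros) auto
  then show ?thesis by (simp add: deriv_phi_N[abs_def])
qed

lemma Np_nz: assumes "X \<noteq> {}" shows "Np \<noteq> 0"
proof
  assume N0: "Np = 0"
  have "\<And>x. (\<phi> has_real_derivative 0) (at x)"
    using phi_deriv deriv_phi deriv_phi_N N0 by (metis div_0 poly_0)
  then have const: "\<phi> x = \<phi> y" for x y by (intro DERIV_isconst_all) auto
  obtain w where "w \<in> X" using assms by auto
  then have "poly F w = 0" using X_roots by auto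
  then have "cos (\<phi> w) = 0" by (simp add: cos_phi_F)
  then have "cos (\<phi> x) = 0" for x using const by metis
  then have "poly F x = 0" for x using gam_nz[of x] cos_phi_F[of x] by simp
  then show False using F_nz poly_all_0_iff_0 by blast
qed

lemma sgn_deriv: "sgn (deriv \<phi> x) = sgn (poly Np x)"
  using gam_nz[of x] by (simp add: deriv_phi_N sgn_divide)

end


lemma eventually_notin_finite: "finite Z \<Longrightarrow> eventually (\<lambda>x. x \<notin> Z) (at (w::real))"
  using islimpt_finite islimpt_iff_eventually by blast

lemma sign_aux1: "(A::real) * t * B > 0 \<Longrightarrow> t < 0 \<Longrightarrow> - sgn B * A > 0"
  by (auto simp: zero_less_mult_iff sgn_if mult_less_0_iff)

lemma sign_aux2: "(A::real) * t * B > 0 \<Longrightarrow> t > 0 \<Longrightarrow> sgn B * A > 0"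
  by (auto simp: zero_less_mult_iff sgn_if mult_less_0_iff)

context L17 begin

definition "C x = round (\<phi> x / pi)"

lemma cos_sigma: "\<sigma> * poly F x \<ge> 0 \<Longrightarrow> \<sigma> * cos (\<phi> x) \<ge> 0"
  using gam_nz[of x] by (simp add: cos_phi_F)

lemma strict_band:
  assumes "\<bar>\<phi> x - pi * of_int k\<bar> \<le> pi/2" "poly F x \<noteq> 0"
  shows "\<bar>\<phi> x - pi * of_int k\<bar> < pi/2" "C x = k"
proof -
  show s: "\<bar>\<phi> x - pi * of_int k\<bar> < pi/2"
  proof (rule ccontr)
    assume "\<not> ?thesis"
    then have "\<phi> x - pi * of_int k = pi/2 \<or> \<phi> x - pi * of_int k = -(pi/2)" using assms(1) by linarith
    then have "cos (\<phi> x - pi * of_int k) = 0" by (metis cos_minus cos_pi_half)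
    then have "cos (\<phi> x) = 0" using cos_shift[of "\<phi> x" k] by simp
    then show False using assms(2) gam_nz[of x] by (simp add: cos_phi_F)
  qed
  have "\<phi> x / pi - of_int k = (\<phi> x - pi * of_int k) / pi" by (simp add: field_simps)
  then have "\<bar>\<phi> x / pi - of_int k\<bar> = \<bar>\<phi> x - pi * of_int k\<bar> / pi" by simp
  also have "\<dots> < 1/2" using s pi_gt_zero by (simp add: field_simps)
  finally show "C x = k" unfolding C_def by (rule round_unique')
qed

lemma side_pos:
  assumes ab: "a < b" and nz: "\<forall>z\<in>{a<..<b}. poly Np z \<noteq> 0"
    and xy: "x \<in> {a..b}" "y \<in> {a..b}" "x < y" "\<epsilon> * \<phi> x < \<epsilon> * \<phi> y"
  shows "\<forall>z\<in>{a<..<b}. \<epsilon> * deriv \<phi> z > 0"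
proof (rule deriv_sign_lemma[OF ab _ _ _ _ xy])
  show "continuous_on {a..b} (\<lambda>x. \<epsilon> * \<phi> x)"
    using cont by (intro continuous_intros) (auto intro: continuous_on_subset)
  show "((\<lambda>x. \<epsilon> * \<phi> x) has_real_derivative \<epsilon> * deriv \<phi> z) (at z)" for z
    using phi_deriv[of z] deriv_phi[of z] by (auto intro: DERIV_cmult)
  show "continuous_on {a<..<b} (\<lambda>z. \<epsilon> * deriv \<phi> z)"
    using deriv_cont by (intro continuous_intros)
  have "\<epsilon> \<noteq> 0" using xy(4) by auto
  moreover have "deriv \<phi> z \<noteq> 0" if "z \<in> {a<..<b}" for z
    using nz that sgn_deriv[of z] by (metis sgn_0 sgn_eq_0_iff)
  ultimately show "\<forall>z\<in>{a<..<b}. \<epsilon> * deriv \<phi> z \<noteq> 0" by auto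
qed

end


lemma lin1: "\<bar>x - a - c\<bar> \<le> c/2 \<Longrightarrow> \<bar>x - a\<bar> \<le> c/2 \<Longrightarrow> x = a + 1 * (c/2)" for x a c :: real
  by arith
lemma lin2: "\<bar>x - a + c\<bar> \<le> c/2 \<Longrightarrow> \<bar>x - a\<bar> \<le> c/2 \<Longrightarrow> x = a + (-1) * (c/2)" for x a c :: real
  by arith
lemma lin3: "\<bar>x - a\<bar> < c/2 \<Longrightarrow> y = a + e * (c/2) \<Longrightarrow> e \<in> {-1,1} \<Longrightarrow> e * x < e * y" for x y a c e :: real
  unfolding abs_less_iff by (elim insertE) (auto simp: field_simps)
lemma lin4: "\<bar>x - b\<bar> < c/2 \<Longrightarrow> b = a + e * c \<Longrightarrow> y = a + e * (c/2) \<Longrightarrow> e \<in> {-1,1} \<Longrightarrow> e * y < e * x" for x y a b c e :: real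
  unfolding abs_less_iff by (elim insertE) (auto simp: field_simps)

context L17 begin

lemma local_crossing:
  assumes wX: "w \<in> X"
  shows "\<exists>\<delta>>0. (\<forall>x. x \<noteq> w \<and> \<bar>x - w\<bar> < \<delta> \<longrightarrow> poly F x \<noteq> 0 \<and> x \<notin> X) \<and>
    (\<exists>s. (\<forall>x. x \<noteq> w \<and> \<bar>x - w\<bar> < \<delta> \<longrightarrow> sgn (deriv \<phi> x) = s) \<and>
         (\<forall>x y. w - \<delta> < x \<and> x < w \<and> w < y \<and> y < w + \<delta> \<longrightarrow> of_int (C y) - of_int (C x) = s))"
proof -
  define r where "r = order w F"
  have rodd: "odd r" using wX by (simp add: r_def X_def odd_crossings_def F_def)
  obtain R where R: "F = [:-w,1:]^r * R" "\<not> [:-w,1:] dvd R"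
    using order_decomp[OF F_nz] unfolding r_def by blast
  have Rw: "poly R w \<noteq> 0" using R(2) by (simp add: poly_eq_0_iff_dvd)
  have Fw: "poly F w = 0" using wX X_roots by auto
  have "isCont (\<lambda>x. poly R x * poly R w) w" by (intro continuous_intros)
  then have "((\<lambda>x. poly R x * poly R w) \<longlongrightarrow> poly R w * poly R w) (at w)" by (simp add: isCont_def)
  moreover have "poly R w * poly R w > 0" using Rw by (metis not_real_square_gt_zero)
  ultimately have e1: "eventually (\<lambda>x. poly R x * poly R w > 0) (at w)"
    using order_tendstoD(1) by blast
  have e2: "eventually (\<lambda>x. x \<notin> {x. poly Np x = 0}) (at w)"
    using Np_nz wX poly_roots_finite eventually_notin_finite by blast
  have e3: "eventually (\<lambda>x. x \<notin> X) (at w)"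
    using X_finite eventually_notin_finite by blast
  have e4: "eventually (\<lambda>x. x \<notin> {x. poly F x = 0}) (at w)"
    using F_nz poly_roots_finite eventually_notin_finite by blast
  have "eventually (\<lambda>x. poly R x * poly R w > 0 \<and> poly Np x \<noteq> 0 \<and> x \<notin> X \<and> poly F x \<noteq> 0) (at w)"
    using eventually_conj[OF e1 eventually_conj[OF e2 eventually_conj[OF e3 e4]]] by simp
  then obtain \<delta> where \<delta>: "\<delta> > 0"
    "\<And>x. x \<noteq> w \<Longrightarrow> \<bar>x - w\<bar> < \<delta> \<Longrightarrow> poly R x * poly R w > 0 \<and> poly Np x \<noteq> 0 \<and> x \<notin> X \<and> poly F x \<noteq> 0"
    unfolding eventually_at by (auto simp: dist_real_def)
  have sgnF: "poly F x * (x - w) * poly R w > 0" if "x \<noteq> w" "\<bar>x - w\<bar> < \<delta>" for x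
  proof -
    have e: "poly F x * (x - w) * poly R w = (x - w) ^ Suc r * (poly R x * poly R w)"
      using R(1) by (simp add: algebra_simps)
    have "(x - w) ^ Suc r > 0" using rodd that(1) by (simp add: zero_less_power_eq del: power_Suc)
    then show ?thesis unfolding e using \<delta>(2)[OF that] mult_pos_pos by blast
  qed
  define \<rho> where "\<rho> = sgn (poly R w)"
  have \<rho>: "\<rho> \<in> {-1,1}" "- \<rho> \<in> {-1, 1::real}" using Rw by (auto simp: \<rho>_def sgn_if)
  have left: "\<forall>x\<in>{w-\<delta><..w}. (-\<rho>) * cos (\<phi> x) \<ge> 0"
  proof
    fix x assume x: "x \<in> {w-\<delta><..w}"
    show "(-\<rho>) * cos (\<phi> x) \<ge> 0"
    proof (cases "x = w")
      case True then show ?thesis using Fw by (intro cos_sigma) simp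
    next
      case False
      then have "- sgn (poly R w) * poly F x > 0" using x by (intro sign_aux1[OF sgnF]) auto
      then show ?thesis by (intro cos_sigma) (simp add: \<rho>_def)
    qed
  qed
  have right: "\<forall>x\<in>{w..<w+\<delta>}. \<rho> * cos (\<phi> x) \<ge> 0"
  proof
    fix x assume x: "x \<in> {w..<w+\<delta>}"
    show "\<rho> * cos (\<phi> x) \<ge> 0"
    proof (cases "x = w")
      case True then show ?thesis using Fw by (intro cos_sigma) simp
    next
      case False
      then have "sgn (poly R w) * poly F x > 0" using x by (intro sign_aux2[OF sgnF]) auto
      then show ?thesis by (intro cos_sigma) (simp add: \<rho>_def)
    qed
  qed
  obtain k1 where k1: "(-\<rho>) * cos (pi * of_int k1) > 0" "\<forall>x\<in>{w-\<delta><..w}. \<bar>\<phi> x - pi * of_int k1\<bar> \<le> pi/2"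
  proof -
    have c: "continuous_on {w-\<delta><..w} \<phi>" using cont continuous_on_subset by blast
    have n: "{w-\<delta><..w} \<noteq> {}" using \<delta>(1) by auto
    show ?thesis using band_connected[OF connected_Ioc n c \<rho>(2) left] that by blast
  qed
  obtain k2 where k2: "\<rho> * cos (pi * of_int k2) > 0" "\<forall>x\<in>{w..<w+\<delta>}. \<bar>\<phi> x - pi * of_int k2\<bar> \<le> pi/2"
  proof -
    have c: "continuous_on {w..<w+\<delta>} \<phi>" using cont continuous_on_subset by blast
    have n: "{w..<w+\<delta>} \<noteq> {}" using \<delta>(1) by auto
    show ?thesis using band_connected[OF connected_Ico n c \<rho>(1) right] that by blast
  qed
  have "k1 \<noteq> k2" using k1(1) k2(1) by auto
  have w1: "\<bar>\<phi> w - pi * of_int k1\<bar> \<le> pi/2" using k1(2) \<delta>(1) by auto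
  have w2: "\<bar>\<phi> w - pi * of_int k2\<bar> \<le> pi/2" using k2(2) \<delta>(1) by auto
  have "pi * \<bar>of_int k1 - of_int k2\<bar> \<le> pi" 
  proof -
    have "pi * \<bar>of_int k1 - of_int k2\<bar> = \<bar>pi * of_int k1 - pi * of_int k2\<bar>" by (metis abs_mult abs_of_pos pi_gt_zero right_diff_distrib)
    also have "\<dots> \<le> pi" using w1 w2 by linarith
    finally show ?thesis .
  qed
  then have "\<bar>of_int k1 - of_int k2\<bar> \<le> (1::real)" using pi_gt_zero by simp
  then have "\<bar>k1 - k2\<bar> \<le> 1" by linarith
  then have kk: "k2 = k1 + 1 \<or> k2 = k1 - 1" using \<open>k1 \<noteq> k2\<close> by linarith
  have Cl: "C x = k1" if "w - \<delta> < x" "x < w" for x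
    using strict_band(2)[of x k1] k1(2) \<delta>(2)[of x] that by auto
  have Cr: "C x = k2" if "w < x" "x < w + \<delta>" for x
    using strict_band(2)[of x k2] k2(2) \<delta>(2)[of x] that by auto
  have Sl: "\<bar>\<phi> x - pi * of_int k1\<bar> < pi/2" if "w - \<delta> < x" "x < w" for x
    using strict_band(1)[of x k1] k1(2) \<delta>(2)[of x] that by auto
  have Sr: "\<bar>\<phi> x - pi * of_int k2\<bar> < pi/2" if "w < x" "x < w + \<delta>" for x
    using strict_band(1)[of x k2] k2(2) \<delta>(2)[of x] that by auto
  have Nl: "\<forall>z\<in>{w-\<delta><..<w}. poly Np z \<noteq> 0" using \<delta>(2) by auto
  have Nr: "\<forall>z\<in>{w<..<w+\<delta>}. poly Np z \<noteq> 0" using \<delta>(2) by auto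
  obtain \<epsilon> :: real where eps: "\<epsilon> = of_int (k2 - k1)" "\<epsilon> \<in> {-1,1}"
    using kk by auto
  have phw: "\<phi> w = pi * of_int k1 + \<epsilon> * (pi/2)"
    using kk
  proof
    assume k: "k2 = k1 + 1"
    then have "\<epsilon> = 1" using eps by simp
    moreover have "\<bar>\<phi> w - pi * of_int k1 - pi\<bar> \<le> pi/2" using w2 k by (simp add: distrib_left algebra_simps)
    ultimately show ?thesis using w1 lin1 by metis
  next
    assume k: "k2 = k1 - 1"
    then have "\<epsilon> = -1" using eps by simp
    moreover have "\<bar>\<phi> w - pi * of_int k1 + pi\<bar> \<le> pi/2" using w2 k by (simp add: right_diff_distrib algebra_simps)
    ultimately show ?thesis using w1 lin2 by metis
  qed
  have lt_l: "\<epsilon> * \<phi> x < \<epsilon> * \<phi> w" if "w - \<delta> < x" "x < w" for x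
    using lin3[OF Sl[OF that] phw eps(2)] .
  have lt_r: "\<epsilon> * \<phi> w < \<epsilon> * \<phi> x" if "w < x" "x < w + \<delta>" for x
  proof (rule lin4[OF Sr[OF that] _ phw eps(2)])
    have "of_int k2 = \<epsilon> + of_int k1" using eps(1) by simp
    then show "pi * of_int k2 = pi * of_int k1 + \<epsilon> * pi" by (simp add: algebra_simps)
  qed
  have pl: "\<forall>z\<in>{w-\<delta><..<w}. \<epsilon> * deriv \<phi> z > 0"
    by (rule side_pos[OF _ Nl, of "w - \<delta>/2" w]) (use \<delta>(1) lt_l in auto)
  have pr: "\<forall>z\<in>{w<..<w+\<delta>}. \<epsilon> * deriv \<phi> z > 0"
    by (rule side_pos[OF _ Nr, of w "w + \<delta>/2"]) (use \<delta>(1) lt_r in auto)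
  have sg: "sgn (deriv \<phi> x) = \<epsilon>" if "x \<noteq> w" "\<bar>x - w\<bar> < \<delta>" for x
  proof (cases "x < w")
    case True then have "\<epsilon> * deriv \<phi> x > 0" using pl that by auto
    then show ?thesis using eps(2) by (auto simp: sgn_if zero_less_mult_iff)
  next
    case False then have "\<epsilon> * deriv \<phi> x > 0" using pr that by auto
    then show ?thesis using eps(2) by (auto simp: sgn_if zero_less_mult_iff)
  qed
  show ?thesis
    apply (rule exI[of _ \<delta>])
    using \<delta> sg Cl Cr eps(1) by auto
qed

end


context L17 begin

definition "idx w = Lim (at w) (\<lambda>x. sgn (deriv \<phi> x))"

lemma band_noX:
  assumes S: "connected S" "S \<inter> X = {}" "b \<in> S" "poly F b \<noteq> 0"
  shows "\<forall>x\<in>S. \<bar>\<phi> x - pi * of_int (C b)\<bar> \<le> pi/2"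
proof -
  have "\<forall>r\<in>S. even (order r F)" using S(2) by (auto simp: X_def odd_crossings_def F_def)
  then obtain \<sigma> where s: "\<sigma> \<in> {-1,1}" "\<forall>x\<in>S. \<sigma> * poly F x \<ge> 0"
    using even_order_sign[OF S(1)] by blast
  have "\<forall>x\<in>S. \<sigma> * cos (\<phi> x) \<ge> 0" using s(2) cos_sigma by blast
  moreover have "continuous_on S \<phi>" using cont continuous_on_subset by blast
  moreover have "S \<noteq> {}" using S by auto
  ultimately obtain k where k: "\<forall>x\<in>S. \<bar>\<phi> x - pi * of_int k\<bar> \<le> pi/2"
    using band_connected[OF S(1) _ _ s(1)] by blast
  have "C b = k" using strict_band(2)[of b k] k S by auto
  then show ?thesis using k by simp
qed

lemma C_eq_noX:
  assumes "connected S" "S \<inter> X = {}" "a \<in> S" "b \<in> S" "poly F a \<noteq> 0" "poly F b \<noteq> 0"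
  shows "C a = C b"
  using band_noX[OF assms(1,2,4,6)] strict_band(2)[of a "C b"] assms by auto

lemma crossing_idx:
  assumes "w \<in> X"
  shows "\<exists>\<delta>>0. (\<forall>x. x \<noteq> w \<and> \<bar>x - w\<bar> < \<delta> \<longrightarrow> poly F x \<noteq> 0 \<and> x \<notin> X) \<and>
    ((\<lambda>x. sgn (deriv \<phi> x)) \<longlongrightarrow> idx w) (at w) \<and>
    (\<forall>x y. w - \<delta> < x \<and> x < w \<and> w < y \<and> y < w + \<delta> \<longrightarrow> of_int (C y) - of_int (C x) = idx w)"
proof -
  obtain \<delta> s where d: "\<delta> > 0" "\<forall>x. x \<noteq> w \<and> \<bar>x - w\<bar> < \<delta> \<longrightarrow> poly F x \<noteq> 0 \<and> x \<notin> X"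
    "\<forall>x. x \<noteq> w \<and> \<bar>x - w\<bar> < \<delta> \<longrightarrow> sgn (deriv \<phi> x) = s"
    "\<forall>x y. w - \<delta> < x \<and> x < w \<and> w < y \<and> y < w + \<delta> \<longrightarrow> of_int (C y) - of_int (C x) = s"
    using local_crossing[OF assms] by blast
  have ev: "eventually (\<lambda>x. sgn (deriv \<phi> x) = s) (at w)"
    unfolding eventually_at using d(1,3) by (auto simp: dist_real_def)
  have t: "((\<lambda>x. sgn (deriv \<phi> x)) \<longlongrightarrow> s) (at w)"
    by (rule tendsto_eventually) (use ev in \<open>auto elim: eventually_mono\<close>)
  then have "idx w = s" unfolding idx_def by (intro tendsto_Lim) auto
  then show ?thesis using d t by auto
qed

lemma main_induct:
  "\<forall>a b. a < b \<longrightarrow> poly F a \<noteq> 0 \<longrightarrow> poly F b \<noteq> 0 \<longrightarrow> card (X \<inter> {a<..<b}) = n \<longrightarrow>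
     of_int (C b) - of_int (C a) = (\<Sum>w\<in>X \<inter> {a<..<b}. idx w)"
proof (induction n)
  case 0
  show ?case
  proof (intro allI impI)
    fix a b :: real assume ab: "a < b" "poly F a \<noteq> 0" "poly F b \<noteq> 0" "card (X \<inter> {a<..<b}) = 0"
    have e: "X \<inter> {a<..<b} = {}" using ab(4) X_finite by simp
    have "a \<notin> X" "b \<notin> X" using ab X_roots by auto
    then have "{a..b} \<inter> X = {}" using e by (auto simp: less_eq_real_def)
    then have "C a = C b" using C_eq_noX[of "{a..b}" a b] ab by auto
    then show "of_int (C b) - of_int (C a) = (\<Sum>w\<in>X \<inter> {a<..<b}. idx w)" using e by simp
  qed
next
  case (Suc n)
  show ?case
  proof (intro allI impI)
    fix a b :: real assume ab: "a < b" "poly F a \<noteq> 0" "poly F b \<noteq> 0" "card (X \<inter> {a<..<b}) = Suc n"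
    define Y where "Y = X \<inter> {a<..<b}"
    have Yf: "finite Y" using X_finite by (simp add: Y_def)
    have Yne: "Y \<noteq> {}" using ab(4) by (auto simp: Y_def)
    define w where "w = Min Y"
    have wY: "w \<in> Y" using Yf Yne by (simp add: w_def)
    have wmin: "\<And>z. z \<in> Y \<Longrightarrow> w \<le> z" using Yf by (simp add: w_def)
    have wX: "w \<in> X" "a < w" "w < b" using wY by (auto simp: Y_def)
    obtain \<delta> where d: "\<delta> > 0" "\<forall>x. x \<noteq> w \<and> \<bar>x - w\<bar> < \<delta> \<longrightarrow> poly F x \<noteq> 0 \<and> x \<notin> X"
      "\<forall>x y. w - \<delta> < x \<and> x < w \<and> w < y \<and> y < w + \<delta> \<longrightarrow> of_int (C y) - of_int (C x) = idx w"
      using crossing_idx[OF wX(1)] by blast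
    define e where "e = min \<delta> (min (w - a) (b - w)) / 2"
    have e: "e > 0" "e < \<delta>" "e < w - a" "e < b - w" using d(1) wX by (auto simp: e_def)
    define x where "x = w - e"
    define y where "y = w + e"
    have Fx: "poly F x \<noteq> 0" "poly F y \<noteq> 0" using d(2) e by (auto simp: x_def y_def)
    have "a \<notin> X" using ab X_roots by auto
    have "{a..x} \<inter> X = {}"
    proof (rule ccontr)
      assume "\<not> ?thesis"
      then obtain z where z: "z \<in> X" "a \<le> z" "z \<le> x" by auto
      then have "z \<noteq> a" using \<open>a \<notin> X\<close> by auto
      then have "z \<in> Y" using z e wX by (auto simp: Y_def x_def)
      then show False using wmin[of z] z e by (auto simp: x_def)
    qed
    then have Cax: "C a = C x" using C_eq_noX[of "{a..x}" a x] ab Fx e by (auto simp: x_def)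
    have Cxy: "of_int (C y) - of_int (C x) = idx w" using d(3) e by (auto simp: x_def y_def)
    have Ysplit: "Y = insert w (X \<inter> {y<..<b})"
    proof
      show "Y \<subseteq> insert w (X \<inter> {y<..<b})"
      proof
        fix z assume z: "z \<in> Y"
        have "w \<le> z" using wmin z .
        show "z \<in> insert w (X \<inter> {y<..<b})"
        proof (cases "z = w")
          case False
          then have "\<not> \<bar>z - w\<bar> < \<delta>" using d(2) z by (auto simp: Y_def)
          then have "y < z" using \<open>w \<le> z\<close> e by (auto simp: y_def)
          then show ?thesis using z by (auto simp: Y_def)
        qed simp
      qed
      show "insert w (X \<inter> {y<..<b}) \<subseteq> Y" using wY e wX by (auto simp: Y_def y_def)
    qed
    have wn: "w \<notin> X \<inter> {y<..<b}" using e by (auto simp: y_def)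
    have "card (X \<inter> {y<..<b}) = n"
      using ab(4) Ysplit wn X_finite by (simp add: Y_def)
    moreover have "y < b" using e by (simp add: y_def)
    ultimately have IH: "of_int (C b) - of_int (C y) = (\<Sum>z\<in>X \<inter> {y<..<b}. idx z)"
      using Suc.IH Fx ab by blast
    have "(\<Sum>z\<in>Y. idx z) = idx w + (\<Sum>z\<in>X \<inter> {y<..<b}. idx z)"
      unfolding Ysplit using X_finite wn by simp
    then show "of_int (C b) - of_int (C a) = (\<Sum>w\<in>X \<inter> {a<..<b}. idx w)"
      using IH Cxy Cax by (simp add: Y_def)
  qed
qed

end


lemma abs_at_top: "filterlim (\<lambda>x::real. \<bar>x\<bar>) at_top at_top"
  unfolding filterlim_at_top
proof
  fix Z :: real
  show "eventually (\<lambda>x. Z \<le> \<bar>x\<bar>) at_top"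
    by (rule eventually_mono[OF eventually_ge_at_top[of Z]]) auto
qed

lemma abs_at_bot: "filterlim (\<lambda>x::real. \<bar>x\<bar>) at_top at_bot"
  unfolding filterlim_at_top
proof
  fix Z :: real
  show "eventually (\<lambda>x. Z \<le> \<bar>x\<bar>) at_bot"
    by (rule eventually_mono[OF eventually_le_at_bot[of "-Z"]]) auto
qed

context L17 begin

lemma gam_reflect:
  assumes "x \<noteq> 0"
  shows "gam x = complex_of_real (x ^ degree p) * poly (reflect_poly p) (inverse (\<i> * complex_of_real x))"
proof -
  define z where "z = \<i> * complex_of_real x"
  have z: "z \<noteq> 0" using assms by (simp add: z_def)
  have "poly (reflect_poly p) (inverse z) = inverse z ^ degree p * poly p z"
    using poly_reflect_poly_nz[of "inverse z" p] z by simp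
  then have "poly p z = z ^ degree p * poly (reflect_poly p) (inverse z)"
    using z by (simp add: field_simps power_inverse)
  then show ?thesis
    by (simp add: gam_def imag_axis_curve_def z_def power_mult_distrib field_simps)
qed

lemma sin_lim:
  assumes Fl: "filterlim (\<lambda>x::real. \<bar>x\<bar>) at_top G"
  shows "((\<lambda>x. sin (\<phi> x)) \<longlongrightarrow> 0) G"
proof -
  define R where "R = reflect_poly p"
  define u where "u x = inverse (\<i> * complex_of_real x)" for x
  have "((\<lambda>x. inverse \<bar>x\<bar>) \<longlongrightarrow> 0) G" by (rule tendsto_inverse_0_at_top[OF Fl])
  then have "((\<lambda>x. norm (u x)) \<longlongrightarrow> 0) G" by (simp add: u_def norm_inverse norm_mult)
  then have ul: "(u \<longlongrightarrow> 0) G" by (simp add: tendsto_norm_zero_iff)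
  have Rl: "((\<lambda>x. poly R (u x)) \<longlongrightarrow> lead_coeff p) G"
    using isCont_tendsto_compose[OF _ ul, of "poly R"] by (simp add: R_def)
  have a0: "Im (lead_coeff p) = 0" "lead_coeff p \<noteq> 0"
    using lc_real lc_pos complex_is_Real_iff by auto
  have "((\<lambda>x. \<bar>Im (poly R (u x))\<bar> / cmod (poly R (u x))) \<longlongrightarrow> \<bar>Im (lead_coeff p)\<bar> / cmod (lead_coeff p)) G"
    using a0 by (intro tendsto_intros Rl) auto
  then have rl: "((\<lambda>x. \<bar>Im (poly R (u x))\<bar> / cmod (poly R (u x))) \<longlongrightarrow> 0) G" using a0 by simp
  have ev: "eventually (\<lambda>x. (1::real) \<le> \<bar>x\<bar>) G" using Fl by (simp add: filterlim_at_top)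
  have "eventually (\<lambda>x. \<bar>Im (poly R (u x))\<bar> / cmod (poly R (u x)) = \<bar>sin (\<phi> x)\<bar>) G"
  proof (rule eventually_mono[OF ev])
    fix x :: real assume "1 \<le> \<bar>x\<bar>"
    then have x: "x \<noteq> 0" by auto
    have g: "gam x = complex_of_real (x ^ degree p) * poly R (u x)"
      using gam_reflect[OF x] by (simp add: R_def u_def)
    have "\<bar>sin (\<phi> x)\<bar> = \<bar>Im (gam x)\<bar> / cmod (gam x)" by (simp add: sin_phi)
    also have "\<dots> = (\<bar>x\<bar> ^ degree p * \<bar>Im (poly R (u x))\<bar>) / (\<bar>x\<bar> ^ degree p * cmod (poly R (u x)))"
      unfolding g by (simp add: norm_mult abs_mult norm_power power_abs)
    also have "\<dots> = \<bar>Im (poly R (u x))\<bar> / cmod (poly R (u x))" using x by simp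
    finally show "\<bar>Im (poly R (u x))\<bar> / cmod (poly R (u x)) = \<bar>sin (\<phi> x)\<bar>" by simp
  qed
  then have "((\<lambda>x. \<bar>sin (\<phi> x)\<bar>) \<longlongrightarrow> 0) G" using rl by (rule Lim_transform_eventually[rotated])
  then show ?thesis by (simp add: tendsto_rabs_zero_iff)
qed

lemma phi_lim:
  assumes Fl: "filterlim (\<lambda>x::real. \<bar>x\<bar>) at_top G"
    and S: "connected S" "S \<inter> X = {}" "b \<in> S" "poly F b \<noteq> 0" and evS: "eventually (\<lambda>x. x \<in> S) G"
  shows "(\<phi> \<longlongrightarrow> pi * of_int (C b)) G"
proof -
  define k where "k = C b"
  have band: "\<forall>x\<in>S. \<bar>\<phi> x - pi * of_int k\<bar> \<le> pi/2" using band_noX[OF S] by (simp add: k_def)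
  have "((\<lambda>x. cos (pi * of_int k) * sin (\<phi> x)) \<longlongrightarrow> cos (pi * of_int k) * 0) G"
    by (intro tendsto_intros sin_lim[OF Fl])
  then have "((\<lambda>x. arcsin (cos (pi * of_int k) * sin (\<phi> x))) \<longlongrightarrow> arcsin 0) G"
  proof -
    have "isCont arcsin 0" by (rule isCont_arcsin) auto
    have lim0: "((\<lambda>x. cos (pi * of_int k) * sin (\<phi> x)) \<longlongrightarrow> 0) G"
      using \<open>((\<lambda>x. cos (pi * of_int k) * sin (\<phi> x)) \<longlongrightarrow> cos (pi * of_int k) * 0) G\<close> by (simp only: mult_zero_right)
    show ?thesis by (rule isCont_tendsto_compose[OF \<open>isCont arcsin 0\<close> lim0])
  qed
  then have l: "((\<lambda>x. pi * of_int k + arcsin (cos (pi * of_int k) * sin (\<phi> x))) \<longlongrightarrow> pi * of_int k) G"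
    using tendsto_add[OF tendsto_const] by fastforce
  have "eventually (\<lambda>x. pi * of_int k + arcsin (cos (pi * of_int k) * sin (\<phi> x)) = \<phi> x) G"
  proof (rule eventually_mono[OF evS])
    fix x assume "x \<in> S"
    then have b: "\<bar>\<phi> x - pi * of_int k\<bar> \<le> pi/2" using band by auto
    have "arcsin (cos (pi * of_int k) * sin (\<phi> x)) = arcsin (sin (\<phi> x - pi * of_int k))"
      by (simp add: sin_shift)
    also have "\<dots> = \<phi> x - pi * of_int k" using b unfolding abs_le_iff by (intro arcsin_sin) linarith+
    finally show "pi * of_int k + arcsin (cos (pi * of_int k) * sin (\<phi> x)) = \<phi> x" by simp
  qed
  then show ?thesis using l k_def by (auto intro: Lim_transform_eventually[rotated])
qed

end


context L17 begin

lemma final: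
  shows "(\<exists>L. (\<phi> \<longlongrightarrow> L) at_top) \<and> (\<exists>L. (\<phi> \<longlongrightarrow> L) at_bot)
    \<and> finite (odd_crossings p)
    \<and> (\<forall>w\<in>odd_crossings p. \<exists>s. ((\<lambda>x. sgn (deriv \<phi> x)) \<longlongrightarrow> s) (at w))
    \<and> Delta \<phi> = pi * (\<Sum>w\<in>odd_crossings p. Lim (at w) (\<lambda>x. sgn (deriv \<phi> x)))"
proof -
  define Z where "Z = {x. poly F x = 0}"
  have Zf: "finite Z" using F_nz poly_roots_finite by (simp add: Z_def)
  define M where "M = Max (insert 0 (abs ` Z)) + 1"
  have M: "\<bar>z\<bar> < M" if "z \<in> Z" for z
  proof -
    have "\<bar>z\<bar> \<le> Max (insert 0 (abs ` Z))" using Zf that by (intro Max_ge) auto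
    then show ?thesis by (simp add: M_def)
  qed
  have M0: "M > 0"
  proof -
    have "0 \<le> Max (insert 0 (abs ` Z))" using Zf by (intro Max_ge) auto
    then show ?thesis by (simp add: M_def)
  qed
  define a where "a = - M"
  define b where "b = M"
  have ab: "a < b" using M0 by (simp add: a_def b_def)
  have Fa: "poly F a \<noteq> 0" using M[of a] by (auto simp: Z_def a_def)
  have Fb: "poly F b \<noteq> 0" using M[of b] by (auto simp: Z_def b_def)
  have Xin: "X \<subseteq> {a<..<b}"
  proof
    fix x assume "x \<in> X"
    then have "x \<in> Z" using X_roots by (auto simp: Z_def)
    then show "x \<in> {a<..<b}" using M[of x] by (auto simp: a_def b_def abs_less_iff)
  qed
  have XI: "X \<inter> {a<..<b} = X" using Xin by auto
  have sum: "of_int (C b) - of_int (C a) = (\<Sum>w\<in>X. idx w)"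
    using main_induct ab Fa Fb XI by metis
  have top: "(\<phi> \<longlongrightarrow> pi * of_int (C b)) at_top"
  proof (rule phi_lim[OF abs_at_top, of "{b..}"])
    show "{b..} \<inter> X = {}" using Xin by auto
  qed (use Fb in auto)
  have bot: "(\<phi> \<longlongrightarrow> pi * of_int (C a)) at_bot"
  proof (rule phi_lim[OF abs_at_bot, of "{..a}"])
    show "{..a} \<inter> X = {}" using Xin by auto
  qed (use Fa in auto)
  have "Delta \<phi> = pi * of_int (C b) - pi * of_int (C a)"
    unfolding Delta_def using tendsto_Lim[OF _ top] tendsto_Lim[OF _ bot] by simp
  also have "\<dots> = pi * (\<Sum>w\<in>X. idx w)" using sum by (simp add: right_diff_distrib[symmetric])
  finally have D: "Delta \<phi> = pi * (\<Sum>w\<in>X. idx w)" .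
  have cr: "\<forall>w\<in>X. \<exists>s. ((\<lambda>x. sgn (deriv \<phi> x)) \<longlongrightarrow> s) (at w)"
    using crossing_idx by blast
  show ?thesis
    using top bot X_finite cr D by (auto simp: X_def idx_def)
qed

end

theorem lemma17:
  fixes p :: "complex poly" and \<phi> :: "real \<Rightarrow> real"
  assumes "lead_coeff p \<in> \<real>" and "Re (lead_coeff p) > 0"
    and "\<forall>w::real. poly p (\<i> * complex_of_real w) \<noteq> 0"
    and "continuous_on UNIV \<phi>"
    and "\<forall>w. cis (\<phi> w) = imag_axis_curve p w / complex_of_real (cmod (imag_axis_curve p w))"
  shows "(\<exists>L. (\<phi> \<longlongrightarrow> L) at_top) \<and> (\<exists>L. (\<phi> \<longlongrightarrow> L) at_bot)
    \<and> finite (odd_crossings p)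
    \<and> (\<forall>w\<in>odd_crossings p. \<exists>s. ((\<lambda>x. sgn (deriv \<phi> x)) \<longlongrightarrow> s) (at w))
    \<and> Delta \<phi> = pi * (\<Sum>w\<in>odd_crossings p. Lim (at w) (\<lambda>x. sgn (deriv \<phi> x)))"
proof -
  interpret L17 p \<phi> using assms by unfold_locales
  show ?thesis by (rule final)
qed


end
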